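(* Let $Q\subset V$ be a polytope and let $\mathscr V$ be the vertex set of some deformation of $Q$. Let $\mathrm{Def}(Q)|_{\mathscr V}=\{Q'\in\mathrm{Def}(Q): Q'\subseteq Q,\ \mathrm{Vert}(Q')\subseteq\mathscr V\}$, let $\min(\Sigma_Q^\vee)$ be the set of tangent cones of $Q$ at its vertices, let $X_{\mathscr V}=\{C+v: C\in\min(\Sigma_Q^\vee), v\in\mathscr V\}$, and define $\mathcal F_{\mathscr V}:\mathbb I(\mathrm{Def}(Q)|_{\mathscr V})\to\mathbb Z^{X_{\mathscr V}}$ by $\mathbf 1_P\mapsto\sum_{C+v\in X_{\mathscr V},\ C+v\text{ tightly contains }P}\mathbf e_{C+v}$. Then there is an injective $\mathbb Z$-linear map $\mathcal E_{\mathscr V}:\mathbb Z^{X_{\mathscr V}}\to\mathbb Z^{\oplus\mathrm{tran}(\Sigma_Q^\vee)}$ such that $\mathcal E_{\mathscr V}\circ\mathcal F_{\mathscr V}=\mathcal F\circ\iota$, where $\iota:\mathbb I(\mathrm{Def}(Q)|_{\mathscr V})\hookrightarrow\mathbb I(\mathrm{Def}^+(Q))$ is the inclusion and $\mathcal F:\mathbb I(\mathrm{Def}^+(Q))\to\mathbb Z^{\oplus\mathrm{tran}(\Sigma_Q^\vee)}$ is the map $\mathbf 1_P\mapsto\sum_{C+v\in\mathrm{tran}(\Sigma_Q^\vee),\ C+v\text{ tightly contains }P}\mathbf e_{C+v}$.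
   Context: $V$ is a finite-dimensional real vector space. $\mathbb I(\mathscr P)$ is the $\mathbb Z$-span in $\mathbb Z^V$ of indicator functions $\mathbf 1_P$, $P\in\mathscr P$. For a polyhedron $Q$, $\Sigma_Q$ is its outer normal fan; the tangent cone at a face $F$ is $C_F=\mathrm{Cone}(v'-v\mid v\in F,v'\in Q)$; $\Sigma_Q^\vee$ is the set of tangent cones and $\mathrm{tran}(\Sigma_Q^\vee)=\{C+v:C\in\Sigma_Q^\vee,v\in V\}$. $P$ is an extended deformation of $Q$ if each cone of $\Sigma_P$ is a union of cones of $\Sigma_Q$ ($\mathrm{Def}^+(Q)$ = set of these), and a deformation if moreover $\Sigma_P$ and $\Sigma_Q$ have the same support ($\mathrm{Def}(Q)$ = set of these). $C+v$ tightly contains $P$ if $P\subseteq C+v$ and $P\cap(\mathrm{lineal}(C)+v)\ne\emptyset$. $\mathbb Z^{X}$ has basis $\{\mathbf e_x\}$. *)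

theory Defs
  imports "HOL-Analysis.Analysis"
begin

definition normal_cone :: "'a::euclidean_space set \<Rightarrow> 'a set \<Rightarrow> 'a set" where
  "normal_cone P F = {u. \<forall>x\<in>F. \<forall>y\<in>P. u \<bullet> y \<le> u \<bullet> x}"

definition normal_fan :: "'a::euclidean_space set \<Rightarrow> 'a set set" where
  "normal_fan P = {normal_cone P F | F. F face_of P \<and> F \<noteq> {}}"

definition tangent_cone :: "'a::euclidean_space set \<Rightarrow> 'a set \<Rightarrow> 'a set" where
  "tangent_cone Q F = convex_cone hull {v' - v | v v'. v \<in> F \<and> v' \<in> Q}"

definition dual_fan :: "'a::euclidean_space set \<Rightarrow> 'a set set" where
  "dual_fan Q = {tangent_cone Q F | F. F face_of Q \<and> F \<noteq> {}}"

definition min_dual_fan :: "'a::euclidean_space set \<Rightarrow> 'a set set" where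
  "min_dual_fan Q = {tangent_cone Q {v} | v. v extreme_point_of Q}"

definition tran_dual_fan :: "'a::euclidean_space set \<Rightarrow> 'a set set" where
  "tran_dual_fan Q = {(\<lambda>x. x + v) ` C | C v. C \<in> dual_fan Q}"

definition lineal :: "'a::real_vector set \<Rightarrow> 'a set" where
  "lineal C = C \<inter> uminus ` C"

definition tightly_contains :: "'a::real_vector set \<Rightarrow> 'a \<Rightarrow> 'a set \<Rightarrow> bool" where
  "tightly_contains C v P \<longleftrightarrow>
     P \<subseteq> (\<lambda>x. x + v) ` C \<and> P \<inter> (\<lambda>x. x + v) ` lineal C \<noteq> {}"

definition ext_deformations :: "'a::euclidean_space set \<Rightarrow> 'a set set" where
  "ext_deformations Q = {P. polyhedron P \<and> P \<noteq> {} \<and>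
      (\<forall>N \<in> normal_fan P. \<exists>S \<subseteq> normal_fan Q. N = \<Union>S)}"

definition deformations :: "'a::euclidean_space set \<Rightarrow> 'a set set" where
  "deformations Q = {P \<in> ext_deformations Q. \<Union>(normal_fan P) = \<Union>(normal_fan Q)}"

definition vertices :: "'a::real_vector set \<Rightarrow> 'a set" where
  "vertices P = {x. x extreme_point_of P}"

definition deformations_restr :: "'a::euclidean_space set \<Rightarrow> 'a set \<Rightarrow> 'a set set" where
  "deformations_restr Q W = {Q' \<in> deformations Q. Q' \<subseteq> Q \<and> vertices Q' \<subseteq> W}"

definition X_set :: "'a::euclidean_space set \<Rightarrow> 'a set \<Rightarrow> 'a set set" where
  "X_set Q W = {(\<lambda>x. x + v) ` C | C v. C \<in> min_dual_fan Q \<and> v \<in> W}"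

text \<open>The translate S (= C + v, C a tangent cone of Q) tightly contains P; independent of the
  chosen presentation S = C + v.\<close>
definition tight_translate :: "'a::euclidean_space set \<Rightarrow> 'a set \<Rightarrow> 'a set \<Rightarrow> bool" where
  "tight_translate Q S P \<longleftrightarrow>
     (\<exists>C v. C \<in> dual_fan Q \<and> S = (\<lambda>x. x + v) ` C \<and> tightly_contains C v P)"

text \<open>Images of the generators 1_P under F_W (into Z^X) and under F (into Z^(+)tran),
  as integer-valued functions on sets (basis vector e_S = indicator of the point S).\<close>
definition FW_gen :: "'a::euclidean_space set \<Rightarrow> 'a set \<Rightarrow> 'a set \<Rightarrow> 'a set \<Rightarrow> int" where
  "FW_gen Q W P = (\<lambda>S. if S \<in> X_set Q W \<and> tight_translate Q S P then 1 else 0)"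

definition F_gen :: "'a::euclidean_space set \<Rightarrow> 'a set \<Rightarrow> 'a set \<Rightarrow> int" where
  "F_gen Q P = (\<lambda>S. if S \<in> tran_dual_fan Q \<and> tight_translate Q S P then 1 else 0)"

text \<open>Z^X as integer functions on sets vanishing off X; Z^(+)T as finitely supported ones vanishing off T.\<close>
definition int_funs_on :: "'b set \<Rightarrow> ('b \<Rightarrow> int) set" where
  "int_funs_on X = {f. \<forall>S. S \<notin> X \<longrightarrow> f S = 0}"

definition int_fin_funs_on :: "'b set \<Rightarrow> ('b \<Rightarrow> int) set" where
  "int_fin_funs_on T = {g. finite {S. g S \<noteq> 0} \<and> (\<forall>S. S \<notin> T \<longrightarrow> g S = 0)}"

end

theory Submission
  imports Defs
begin


lemma cc_tc: "convex_cone (tangent_cone Q F)"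
  unfolding tangent_cone_def by (simp add: convex_cone_convex_cone_hull)

lemma cone_shift_aux:
  fixes C C' :: "'a::real_vector set"
  assumes C: "convex_cone C" and C': "convex_cone C'"
    and eq: "(\<lambda>x. x + a) ` C = (\<lambda>x. x + b) ` C'"
  shows "a - b \<in> C' \<and> b - a \<in> C' \<and> C \<subseteq> C'"
proof -
  have z: "0 \<in> C" "0 \<in> C'" using C C' convex_cone_contains_0 by auto
  have mem: "\<And>c. c \<in> C \<Longrightarrow> c + (a - b) \<in> C'"
  proof -
    fix c assume "c \<in> C"
    then have "c + a \<in> (\<lambda>x. x + b) ` C'" using eq by blast
    then obtain c' where "c' \<in> C'" "c + a = c' + b" by auto
    then show "c + (a - b) \<in> C'" by (simp add: algebra_simps)
  qed
  have mem2: "\<And>c'. c' \<in> C' \<Longrightarrow> c' + (b - a) \<in> C"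
  proof -
    fix c' assume "c' \<in> C'"
    then have "c' + b \<in> (\<lambda>x. x + a) ` C" using eq by blast
    then obtain c where "c \<in> C" "c' + b = c + a" by auto
    then show "c' + (b - a) \<in> C" by (simp add: algebra_simps)
  qed
  have d1: "a - b \<in> C'" using mem[OF z(1)] by simp
  have d2: "b - a \<in> C" using mem2[OF z(2)] by simp
  have "2 *\<^sub>R (a - b) \<in> C'" using d1 C' by (simp add: convex_cone_iff)
  then have "2 *\<^sub>R (a - b) + (b - a) \<in> C" using mem2 by blast
  then have d3: "a - b \<in> C" by (simp add: algebra_simps scaleR_2)
  have "2 *\<^sub>R (b - a) \<in> C" using d2 C by (simp add: convex_cone_iff)
  then have "2 *\<^sub>R (b - a) + (a - b) \<in> C'" using mem by blast
  then have d4: "b - a \<in> C'" by (simp add: algebra_simps scaleR_2)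
  have "C \<subseteq> C'"
  proof
    fix c assume "c \<in> C"
    then have "c + (a - b) \<in> C'" by (rule mem)
    then have "(c + (a - b)) + (b - a) \<in> C'" using d4 C' convex_cone_add by blast
    then show "c \<in> C'" by simp
  qed
  then show ?thesis using d1 d4 by blast
qed

lemma cone_shift:
  fixes C C' :: "'a::real_vector set"
  assumes C: "convex_cone C" and C': "convex_cone C'"
    and eq: "(\<lambda>x. x + a) ` C = (\<lambda>x. x + b) ` C'"
  shows "C = C' \<and> a - b \<in> C \<and> b - a \<in> C"
  using cone_shift_aux[OF C C' eq] cone_shift_aux[OF C' C eq[symmetric]] by blast

lemma shift_lineal:
  fixes C :: "'a::real_vector set"
  assumes C: "convex_cone C" and d: "d \<in> C" "- d \<in> C"
  shows "(\<lambda>x. x + (a + d)) ` C = (\<lambda>x. x + a) ` C"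
proof
  show "(\<lambda>x. x + (a + d)) ` C \<subseteq> (\<lambda>x. x + a) ` C"
  proof
    fix y assume "y \<in> (\<lambda>x. x + (a + d)) ` C"
    then obtain c where c: "c \<in> C" "y = c + (a + d)" by blast
    have "c + d \<in> C" using convex_cone_add[OF C c(1) d(1)] .
    moreover have "y = (c + d) + a" using c(2) by (simp add: algebra_simps)
    ultimately show "y \<in> (\<lambda>x. x + a) ` C" by blast
  qed
  show "(\<lambda>x. x + a) ` C \<subseteq> (\<lambda>x. x + (a + d)) ` C"
  proof
    fix y assume "y \<in> (\<lambda>x. x + a) ` C"
    then obtain c where c: "c \<in> C" "y = c + a" by blast
    have "c + - d \<in> C" using convex_cone_add[OF C c(1) d(2)] .
    moreover have "y = (c + - d) + (a + d)" using c(2) by (simp add: algebra_simps)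
    ultimately show "y \<in> (\<lambda>x. x + (a + d)) ` C" by blast
  qed
qed

lemma bipolar:
  fixes C :: "'a::euclidean_space set"
  assumes C: "convex_cone C" and cl: "closed C" and z: "z \<notin> C"
  shows "\<exists>u. (\<forall>c\<in>C. u \<bullet> c \<le> 0) \<and> u \<bullet> z > 0"
proof -
  have "convex C" using C by (simp add: convex_cone_def)
  then obtain a b where ab: "a \<bullet> z < b" "\<forall>x\<in>C. a \<bullet> x > b"
    using separating_hyperplane_closed_point[OF _ cl z] by blast
  have z0: "0 \<in> C" using C convex_cone_contains_0 by auto
  then have b0: "b < 0" using ab by force
  have "a \<bullet> c \<ge> 0" if c: "c \<in> C" for c
  proof (rule ccontr)
    assume n: "\<not> 0 \<le> a \<bullet> c"
    define t where "t = b / (a \<bullet> c) + 1"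
    have "b / (a \<bullet> c) > 0" using n b0 by (simp add: divide_neg_neg)
    then have tpos: "t \<ge> 0" unfolding t_def by linarith
    have "t *\<^sub>R c \<in> C" using C c tpos by (simp add: convex_cone_iff)
    then have "a \<bullet> (t *\<^sub>R c) > b" using ab by blast
    moreover have "a \<bullet> (t *\<^sub>R c) = b + a \<bullet> c" using n unfolding t_def
      by (simp add: algebra_simps)
    ultimately show False using n by simp
  qed
  then show ?thesis using ab b0 by (intro exI[of _ "-a"]) auto
qed


lemma expose_vertex:
  fixes Q :: "'a::euclidean_space set"
  assumes "polytope Q" "v extreme_point_of Q"
  shows "\<exists>N. \<forall>q\<in>Q. q \<noteq> v \<longrightarrow> N \<bullet> q < N \<bullet> v"
proof -
  have "{v} exposed_face_of Q"
    using assms exposed_face_of_polyhedron polytope_imp_polyhedron face_of_singleton by blast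
  then obtain a b where ab: "Q \<subseteq> {x. a \<bullet> x \<le> b}" "{v} = Q \<inter> {x. a \<bullet> x = b}"
    unfolding exposed_face_of_def by blast
  have "a \<bullet> v = b" using ab(2) by blast
  moreover have "\<forall>q\<in>Q. q \<noteq> v \<longrightarrow> a \<bullet> q < b"
  proof (intro ballI impI)
    fix q assume "q \<in> Q" "q \<noteq> v"
    then have "a \<bullet> q \<le> b" "a \<bullet> q \<noteq> b" using ab by auto
    then show "a \<bullet> q < b" by simp
  qed
  ultimately show ?thesis by auto
qed

lemma tc_sub_K:
  fixes Q :: "'a::euclidean_space set"
  assumes N: "\<forall>q\<in>Q. q \<noteq> v \<longrightarrow> N \<bullet> q < N \<bullet> v"
  shows "tangent_cone Q {v} \<subseteq> {c. c = 0 \<or> N \<bullet> c < 0}"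
  unfolding tangent_cone_def
proof (rule hull_minimal)
  show "{v' - x |x v'. x \<in> {v} \<and> v' \<in> Q} \<subseteq> {c. c = 0 \<or> N \<bullet> c < 0}"
    using N by (auto simp: inner_diff_right)
  show "convex_cone {c. c = 0 \<or> N \<bullet> c < 0}"
    unfolding convex_cone_iff
  proof (intro conjI ballI allI impI)
    fix x y assume "x \<in> {c. c = 0 \<or> N \<bullet> c < 0}" "y \<in> {c. c = 0 \<or> N \<bullet> c < 0}"
    then show "x + y \<in> {c. c = 0 \<or> N \<bullet> c < 0}" by (auto simp: inner_add_right)
  next
    fix x and c :: real assume "x \<in> {c. c = 0 \<or> N \<bullet> c < 0}" "0 \<le> c"
    then show "c *\<^sub>R x \<in> {c. c = 0 \<or> N \<bullet> c < 0}"
      by (cases "c = 0") (auto simp: mult_pos_neg)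
  qed simp
qed

lemma tc_pointed:
  fixes Q :: "'a::euclidean_space set"
  assumes "polytope Q" "v extreme_point_of Q"
    and "c \<in> tangent_cone Q {v}" "- c \<in> tangent_cone Q {v}"
  shows "c = 0"
proof -
  obtain N where N: "\<forall>q\<in>Q. q \<noteq> v \<longrightarrow> N \<bullet> q < N \<bullet> v"
    using expose_vertex assms(1,2) by blast
  have "c = 0 \<or> N \<bullet> c < 0" "- c = 0 \<or> N \<bullet> (- c) < 0"
    using tc_sub_K[OF N] assms(3,4) by blast+
  then show ?thesis by (auto simp: inner_minus_right)
qed



lemma tc_closed:
  fixes Q :: "'a::euclidean_space set"
  assumes "polytope Q"
  shows "closed (tangent_cone Q {v})"
proof -
  have e: "{v' - x |x v'. x \<in> {v} \<and> v' \<in> Q} = (+) (- v) ` Q" by auto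
  have "polytope ((+) (- v) ` Q)" using assms polytope_translation_eq by blast
  then show ?thesis unfolding tangent_cone_def e
    using polyhedron_convex_cone_hull_polytope polyhedron_imp_closed by blast
qed

lemma tc_mono:
  "v \<in> G \<Longrightarrow> tangent_cone Q {v} \<subseteq> tangent_cone Q G"
  unfolding tangent_cone_def by (rule hull_mono) auto

lemma in_tc: "q \<in> Q \<Longrightarrow> x \<in> G \<Longrightarrow> q - x \<in> tangent_cone Q G"
  unfolding tangent_cone_def by (rule hull_inc) auto

lemma core:
  fixes Q :: "'a::euclidean_space set"
  assumes Q: "polytope Q" and P: "P \<in> deformations Q" and v: "v extreme_point_of Q"
  shows "\<exists>p\<in>P. \<forall>y\<in>P. y - p \<in> tangent_cone Q {v}"
proof -
  obtain N where N: "\<forall>q\<in>Q. q \<noteq> v \<longrightarrow> N \<bullet> q < N \<bullet> v"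
    using expose_vertex Q v by blast
  have vQ: "v \<in> Q" using v extreme_point_of_def by blast
  have Nn: "N \<in> normal_cone Q {v}" unfolding normal_cone_def
  proof (intro CollectI ballI)
    fix x y assume "x \<in> {v}" "y \<in> Q"
    then show "N \<bullet> y \<le> N \<bullet> x" using N by (cases "y = v") (auto intro: less_imp_le)
  qed
  have "normal_cone Q {v} \<in> normal_fan Q"
    unfolding normal_fan_def using v face_of_singleton by blast
  then have "N \<in> \<Union>(normal_fan P)" using P Nn unfolding deformations_def by blast
  then obtain H where H: "H face_of P" "H \<noteq> {}" "N \<in> normal_cone P H"
    unfolding normal_fan_def by blast
  have "normal_cone P H \<in> normal_fan P" unfolding normal_fan_def using H by blast
  moreover have "\<forall>N \<in> normal_fan P. \<exists>S \<subseteq> normal_fan Q. N = \<Union>S"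
    using P by (simp add: deformations_def ext_deformations_def)
  ultimately have "\<exists>S \<subseteq> normal_fan Q. normal_cone P H = \<Union>S" by (metis (no_types, lifting))
  then obtain S where S: "S \<subseteq> normal_fan Q" "normal_cone P H = \<Union>S"
    by blast
  then obtain s where s: "s \<in> S" "N \<in> s" using H(3) by blast
  then obtain F' where F': "F' face_of Q" "F' \<noteq> {}" "s = normal_cone Q F'"
    using S(1) unfolding normal_fan_def by blast
  have F'4: "normal_cone Q F' \<subseteq> normal_cone P H" using S(2) s F'(3) by blast
  have F'3: "N \<in> normal_cone Q F'" using s F'(3) by simp
  have "F' \<subseteq> {v}"
  proof
    fix x assume x: "x \<in> F'"
    then have xQ: "x \<in> Q" using F'(1) face_of_imp_subset by blast
    have "N \<bullet> v \<le> N \<bullet> x" using F'3 x vQ unfolding normal_cone_def by blast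
    show "x \<in> {v}"
    proof (rule ccontr)
      assume "x \<notin> {v}"
      then have "N \<bullet> x < N \<bullet> v" using N xQ by simp
      then show False using \<open>N \<bullet> v \<le> N \<bullet> x\<close> by simp
    qed
  qed
  then have "F' = {v}" using F'(2) by blast
  then have sub: "normal_cone Q {v} \<subseteq> normal_cone P H" using F'4 by simp
  obtain p where p: "p \<in> H" using H(2) by blast
  have pP: "p \<in> P" using p H(1) face_of_imp_subset by blast
  have "\<forall>y\<in>P. y - p \<in> tangent_cone Q {v}"
  proof (rule ballI, rule ccontr)
    fix y assume y: "y \<in> P" and ny: "y - p \<notin> tangent_cone Q {v}"
    obtain u where u: "\<forall>c\<in>tangent_cone Q {v}. u \<bullet> c \<le> 0" "u \<bullet> (y - p) > 0"
      using bipolar[OF cc_tc tc_closed[OF Q] ny] by blast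
    have "u \<in> normal_cone Q {v}" unfolding normal_cone_def
    proof (intro CollectI ballI)
      fix x q assume "x \<in> {v}" "q \<in> Q"
      then have "u \<bullet> (q - x) \<le> 0" using u(1) in_tc by blast
      then show "u \<bullet> q \<le> u \<bullet> x" by (simp add: inner_diff_right)
    qed
    then have "u \<in> normal_cone P H" using sub by blast
    then have "u \<bullet> y \<le> u \<bullet> p" using y p unfolding normal_cone_def by blast
    then show False using u(2) by (simp add: inner_diff_right)
  qed
  then show ?thesis using pP by blast
qed



definition vc :: "'a::euclidean_space set \<Rightarrow> 'a set \<Rightarrow> 'a" where
  "vc Q C = (SOME v. v extreme_point_of Q \<and>
      (\<exists>G. G face_of Q \<and> G \<noteq> {} \<and> C = tangent_cone Q G \<and> v \<in> G))"

lemma vc_spec: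
  fixes Q :: "'a::euclidean_space set"
  assumes Q: "polytope Q" and C: "C \<in> dual_fan Q"
  shows "vc Q C extreme_point_of Q \<and>
      (\<exists>G. G face_of Q \<and> G \<noteq> {} \<and> C = tangent_cone Q G \<and> vc Q C \<in> G)"
proof -
  obtain G where G: "G face_of Q" "G \<noteq> {}" "C = tangent_cone Q G"
    using C unfolding dual_fan_def by blast
  have "polytope G" using face_of_polytope_polytope Q G(1) by blast
  then have "compact G" "convex G" using polytope_imp_compact polytope_imp_convex by auto
  then obtain x where "x extreme_point_of G" using extreme_point_exists_convex G(2) by blast
  then have "x extreme_point_of Q" "x \<in> G" using extreme_point_of_face G(1) by blast+
  then have "\<exists>v. v extreme_point_of Q \<and>
      (\<exists>G. G face_of Q \<and> G \<noteq> {} \<and> C = tangent_cone Q G \<and> v \<in> G)" using G by blast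
  then show ?thesis unfolding vc_def by (rule someI_ex)
qed

lemma vc_sub:
  fixes Q :: "'a::euclidean_space set"
  assumes "polytope Q" "C \<in> dual_fan Q"
  shows "tangent_cone Q {vc Q C} \<subseteq> C"
  using vc_spec[OF assms] tc_mono by blast

lemma tcv_dual: "v extreme_point_of Q \<Longrightarrow> tangent_cone Q {v} \<in> dual_fan Q"
  unfolding dual_fan_def using face_of_singleton by blast

lemma vc_vertex:
  fixes Q :: "'a::euclidean_space set"
  assumes Q: "polytope Q" and v: "v extreme_point_of Q"
  shows "vc Q (tangent_cone Q {v}) = v"
proof -
  let ?v = "vc Q (tangent_cone Q {v})"
  obtain G where G: "G face_of Q" "tangent_cone Q {v} = tangent_cone Q G" "?v \<in> G"
    using vc_spec[OF Q tcv_dual[OF v]] by blast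
  have vQ: "v \<in> Q" using v extreme_point_of_def by blast
  have v'Q: "?v \<in> Q" using G(1,3) face_of_imp_subset by blast
  have "v - ?v \<in> tangent_cone Q {v}" using G(2) in_tc[OF vQ G(3)] by simp
  moreover have "- (v - ?v) \<in> tangent_cone Q {v}" using in_tc[OF v'Q, of v "{v}"] by simp
  ultimately have "v - ?v = 0" using tc_pointed[OF Q v] by blast
  then show ?thesis by simp
qed

lemma tight_vertex:
  fixes Q :: "'a::euclidean_space set"
  assumes Q: "polytope Q" and v: "v extreme_point_of Q"
  shows "tight_translate Q ((\<lambda>x. x + p) ` tangent_cone Q {v}) P \<longleftrightarrow>
         p \<in> P \<and> (\<forall>y\<in>P. y - p \<in> tangent_cone Q {v})"
proof
  assume "tight_translate Q ((\<lambda>x. x + p) ` tangent_cone Q {v}) P"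
  then obtain C' w where C': "C' \<in> dual_fan Q" "(\<lambda>x. x + p) ` tangent_cone Q {v} = (\<lambda>x. x + w) ` C'"
    "tightly_contains C' w P" unfolding tight_translate_def by blast
  have cc': "convex_cone C'" using C'(1) cc_tc unfolding dual_fan_def by blast
  have e: "tangent_cone Q {v} = C'" "p - w \<in> tangent_cone Q {v}" "w - p \<in> tangent_cone Q {v}"
    using cone_shift[OF cc_tc cc' C'(2)] by auto
  then have "p - w = 0" using tc_pointed[OF Q v, of "p - w"] by simp
  then have wp: "w = p" by simp
  have sub: "P \<subseteq> (\<lambda>x. x + p) ` tangent_cone Q {v}" and ne: "P \<inter> (\<lambda>x. x + p) ` lineal (tangent_cone Q {v}) \<noteq> {}"
    using C'(3) e(1) wp unfolding tightly_contains_def by auto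
  obtain x where x: "x \<in> P" "x \<in> (\<lambda>x. x + p) ` lineal (tangent_cone Q {v})"
    using ne by blast
  then obtain l where l: "l \<in> lineal (tangent_cone Q {v})" "x = l + p" by blast
  then obtain c where c: "l \<in> tangent_cone Q {v}" "c \<in> tangent_cone Q {v}" "l = - c"
    unfolding lineal_def by blast
  have xl: "x \<in> P" "l \<in> tangent_cone Q {v}" "- l \<in> tangent_cone Q {v}" "x = l + p"
    using x l c by auto
  have "l = 0" using tc_pointed[OF Q v xl(2,3)] .
  then have "p \<in> P" using xl by simp
  moreover have "\<forall>y\<in>P. y - p \<in> tangent_cone Q {v}"
  proof
    fix y assume "y \<in> P"
    then obtain c where "c \<in> tangent_cone Q {v}" "y = c + p" using sub by blast
    then show "y - p \<in> tangent_cone Q {v}" by simp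
  qed
  ultimately show "p \<in> P \<and> (\<forall>y\<in>P. y - p \<in> tangent_cone Q {v})" by blast
next
  assume a: "p \<in> P \<and> (\<forall>y\<in>P. y - p \<in> tangent_cone Q {v})"
  have "P \<subseteq> (\<lambda>x. x + p) ` tangent_cone Q {v}"
  proof
    fix y assume "y \<in> P"
    then have "y - p \<in> tangent_cone Q {v}" using a by blast
    moreover have "y = (y - p) + p" by simp
    ultimately show "y \<in> (\<lambda>x. x + p) ` tangent_cone Q {v}" by blast
  qed
  moreover have "p \<in> (\<lambda>x. x + p) ` lineal (tangent_cone Q {v})"
  proof -
    have "0 \<in> lineal (tangent_cone Q {v})" unfolding lineal_def
      using convex_cone_contains_0[OF cc_tc] by (auto simp: image_iff)
    then show ?thesis by force
  qed
  ultimately have "tightly_contains (tangent_cone Q {v}) p P"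
    using a unfolding tightly_contains_def by blast
  then show "tight_translate Q ((\<lambda>x. x + p) ` tangent_cone Q {v}) P"
    unfolding tight_translate_def using tcv_dual[OF v] by blast
qed

lemma apex_extreme:
  fixes Q :: "'a::euclidean_space set"
  assumes Q: "polytope Q" and v: "v extreme_point_of Q" and cP: "convex P"
    and p: "p \<in> P" and sub: "\<forall>y\<in>P. y - p \<in> tangent_cone Q {v}"
  shows "p extreme_point_of P"
proof -
  obtain N where N: "\<forall>q\<in>Q. q \<noteq> v \<longrightarrow> N \<bullet> q < N \<bullet> v"
    using expose_vertex Q v by blast
  have lt: "N \<bullet> y < N \<bullet> p" if "y \<in> P" "y \<noteq> p" for y
  proof -
    have "y - p = 0 \<or> N \<bullet> (y - p) < 0" using tc_sub_K[OF N] sub that(1) by blast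
    then show ?thesis using that(2) by (auto simp: inner_diff_right)
  qed
  have le: "\<forall>y\<in>P. N \<bullet> y \<le> N \<bullet> p"
  proof
    fix y assume "y \<in> P"
    then show "N \<bullet> y \<le> N \<bullet> p" using lt[of y] by (cases "y = p") auto
  qed
  have "P \<inter> {x. N \<bullet> x = N \<bullet> p} face_of P"
    using face_of_Int_supporting_hyperplane_le[OF cP] le by blast
  moreover have "P \<inter> {x. N \<bullet> x = N \<bullet> p} = {p}"
  proof
    show "P \<inter> {x. N \<bullet> x = N \<bullet> p} \<subseteq> {p}"
    proof
      fix x assume x: "x \<in> P \<inter> {x. N \<bullet> x = N \<bullet> p}"
      show "x \<in> {p}"
      proof (rule ccontr)
        assume "x \<notin> {p}"
        then have "N \<bullet> x < N \<bullet> p" using lt x by blast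
        then show False using x by simp
      qed
    qed
  qed (use p in blast)
  ultimately show ?thesis by (simp add: face_of_singleton)
qed



definition Rel :: "'a::euclidean_space set \<Rightarrow> 'a set \<Rightarrow> 'a set \<Rightarrow> bool" where
  "Rel Q T S \<longleftrightarrow> (\<exists>C p. C \<in> dual_fan Q \<and> T = (\<lambda>x. x + p) ` tangent_cone Q {vc Q C}
      \<and> S = (\<lambda>x. x + p) ` C)"

definition Emap :: "'a::euclidean_space set \<Rightarrow> 'a set \<Rightarrow> ('a set \<Rightarrow> int) \<Rightarrow> ('a set \<Rightarrow> int)" where
  "Emap Q W f = (\<lambda>S. if S \<in> tran_dual_fan Q then (\<Sum>T\<in>{T\<in>X_set Q W. Rel Q T S}. f T) else 0)"

lemma cc_dual: "C \<in> dual_fan Q \<Longrightarrow> convex_cone C"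
  unfolding dual_fan_def using cc_tc by blast

lemma X_form: "T \<in> X_set Q W \<Longrightarrow>
   \<exists>v w. v extreme_point_of Q \<and> w \<in> W \<and> T = (\<lambda>x. x + w) ` tangent_cone Q {v}"
  unfolding X_set_def min_dual_fan_def by blast

lemma Rel_S:
  fixes Q :: "'a::euclidean_space set"
  assumes Q: "polytope Q" and C0: "C0 \<in> dual_fan Q" and S: "S = (\<lambda>x. x + a) ` C0"
    and R: "Rel Q T S"
  shows "\<exists>p. T = (\<lambda>x. x + p) ` tangent_cone Q {vc Q C0} \<and> S = (\<lambda>x. x + p) ` C0"
proof -
  obtain C p where Cp: "C \<in> dual_fan Q" "T = (\<lambda>x. x + p) ` tangent_cone Q {vc Q C}"
      "S = (\<lambda>x. x + p) ` C" using R unfolding Rel_def by blast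
  have "(\<lambda>x. x + p) ` C = (\<lambda>x. x + a) ` C0" using Cp(3) S by simp
  then have "C = C0" using cone_shift[OF cc_dual[OF Cp(1)] cc_dual[OF C0]] by blast
  then show ?thesis using Cp by blast
qed

lemma Rel_X:
  fixes Q :: "'a::euclidean_space set"
  assumes Q: "polytope Q" and T: "T \<in> X_set Q W" and R: "Rel Q T S"
  shows "\<exists>C w. C \<in> dual_fan Q \<and> w \<in> W \<and> S = (\<lambda>x. x + w) ` C"
proof -
  obtain C p where Cp: "C \<in> dual_fan Q" "T = (\<lambda>x. x + p) ` tangent_cone Q {vc Q C}"
      "S = (\<lambda>x. x + p) ` C" using R unfolding Rel_def by blast
  obtain v w where vw: "v extreme_point_of Q" "w \<in> W" "T = (\<lambda>x. x + w) ` tangent_cone Q {v}"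
    using X_form[OF T] by blast
  have ve: "vc Q C extreme_point_of Q" using vc_spec[OF Q Cp(1)] by blast
  have eq: "(\<lambda>x. x + p) ` tangent_cone Q {vc Q C} = (\<lambda>x. x + w) ` tangent_cone Q {v}"
    using Cp(2) vw(3) by simp
  have "p - w \<in> tangent_cone Q {vc Q C}" "w - p \<in> tangent_cone Q {vc Q C}"
    using cone_shift[OF cc_tc cc_tc eq] by auto
  then have "p - w \<in> tangent_cone Q {vc Q C}" "- (p - w) \<in> tangent_cone Q {vc Q C}" by auto
  then have "p - w = 0" using tc_pointed[OF Q ve] by blast
  then show ?thesis using Cp vw by auto
qed

lemma finite_X:
  fixes Q :: "'a::euclidean_space set"
  assumes Q: "polytope Q" and W: "finite W"
  shows "finite (X_set Q W)"
proof -
  have "X_set Q W \<subseteq> (\<lambda>(v,w). (\<lambda>x. x + w) ` tangent_cone Q {v}) ` ({v. v extreme_point_of Q} \<times> W)"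
    unfolding X_set_def min_dual_fan_def by auto
  moreover have "finite {v. v extreme_point_of Q}"
    using finite_polyhedron_extreme_points polytope_imp_polyhedron Q by blast
  ultimately show ?thesis using W finite_subset by blast
qed

lemma finite_dual:
  fixes Q :: "'a::euclidean_space set"
  assumes Q: "polytope Q"
  shows "finite (dual_fan Q)"
proof -
  have "dual_fan Q \<subseteq> (\<lambda>F. tangent_cone Q F) ` {F. F face_of Q}"
    unfolding dual_fan_def by auto
  then show ?thesis using finite_polytope_faces[OF Q] finite_subset by blast
qed

lemma E_diag:
  fixes Q :: "'a::euclidean_space set"
  assumes Q: "polytope Q" and T0: "T0 \<in> X_set Q W"
  shows "Emap Q W f T0 = f T0"
proof -
  obtain v w where vw: "v extreme_point_of Q" "w \<in> W" "T0 = (\<lambda>x. x + w) ` tangent_cone Q {v}"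
    using X_form[OF T0] by blast
  have tr: "T0 \<in> tran_dual_fan Q" unfolding tran_dual_fan_def using vw tcv_dual by blast
  have "{T\<in>X_set Q W. Rel Q T T0} = {T0}"
  proof
    have "Rel Q T0 T0" unfolding Rel_def
      by (intro exI[of _ "tangent_cone Q {v}"] exI[of _ w])
         (simp add: vw(3) tcv_dual[OF vw(1)] vc_vertex[OF Q vw(1)])
    then show "{T0} \<subseteq> {T\<in>X_set Q W. Rel Q T T0}" using T0 by auto
    show "{T\<in>X_set Q W. Rel Q T T0} \<subseteq> {T0}"
    proof
      fix T assume "T \<in> {T\<in>X_set Q W. Rel Q T T0}"
      then obtain C p where Cp: "C \<in> dual_fan Q" "T = (\<lambda>x. x + p) ` tangent_cone Q {vc Q C}"
        "T0 = (\<lambda>x. x + p) ` C" unfolding Rel_def by blast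
      have "(\<lambda>x. x + p) ` C = (\<lambda>x. x + w) ` tangent_cone Q {v}" using Cp(3) vw(3) by simp
      then have "C = tangent_cone Q {v}" using cone_shift[OF cc_dual[OF Cp(1)] cc_tc] by blast
      then have "T = T0" using Cp vc_vertex[OF Q vw(1)] by simp
      then show "T \<in> {T0}" by simp
    qed
  qed
  then show ?thesis using tr unfolding Emap_def by simp
qed



lemma E_main:
  fixes Q :: "'a::euclidean_space set"
  assumes Q: "polytope Q" and W: "finite W" and P: "P \<in> deformations_restr Q W"
  shows "Emap Q W (FW_gen Q W P) S = F_gen Q P S"
proof (cases "S \<in> tran_dual_fan Q")
  case False
  then show ?thesis unfolding Emap_def F_gen_def by simp
next
  case True
  then obtain C0 a where C0: "C0 \<in> dual_fan Q" "S = (\<lambda>x. x + a) ` C0"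
    unfolding tran_dual_fan_def by blast
  define v where "v = vc Q C0"
  have ve: "v extreme_point_of Q" using vc_spec[OF Q C0(1)] v_def by blast
  have vsub: "tangent_cone Q {v} \<subseteq> C0" using vc_sub[OF Q C0(1)] v_def by blast
  have cc0: "convex_cone C0" using cc_dual[OF C0(1)] .
  have PD: "P \<in> deformations Q" "vertices P \<subseteq> W" using P unfolding deformations_restr_def by auto
  have cP: "convex P" using PD(1) polyhedron_imp_convex
    unfolding deformations_def ext_deformations_def by blast
  define B where "B = {T\<in>X_set Q W. Rel Q T S \<and> tight_translate Q T P}"
  have finX: "finite (X_set Q W)" using finite_X[OF Q W] .
  have "Emap Q W (FW_gen Q W P) S = (\<Sum>T\<in>{T\<in>X_set Q W. Rel Q T S}. FW_gen Q W P T)"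
    using True unfolding Emap_def by simp
  also have "\<dots> = (\<Sum>T\<in>{T\<in>X_set Q W. Rel Q T S}. if tight_translate Q T P then 1 else 0)"
    by (rule sum.cong) (auto simp: FW_gen_def)
  also have "\<dots> = (\<Sum>T\<in>B. 1)"
    unfolding B_def using finX
    by (subst sum.inter_filter[symmetric]) (auto intro!: sum.cong)
  also have "\<dots> = int (card B)" by simp
  finally have sumB: "Emap Q W (FW_gen Q W P) S = int (card B)" .
  have formB: "\<exists>p. T = (\<lambda>x. x + p) ` tangent_cone Q {v} \<and> S = (\<lambda>x. x + p) ` C0
      \<and> p \<in> P \<and> (\<forall>y\<in>P. y - p \<in> tangent_cone Q {v})" if T: "T \<in> B" for T
  proof -
    obtain p where p: "T = (\<lambda>x. x + p) ` tangent_cone Q {v}" "S = (\<lambda>x. x + p) ` C0"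
      using Rel_S[OF Q C0] T unfolding B_def v_def by blast
    have "tight_translate Q T P" using T unfolding B_def by blast
    then have "p \<in> P \<and> (\<forall>y\<in>P. y - p \<in> tangent_cone Q {v})"
      using tight_vertex[OF Q ve] p(1) by blast
    then show ?thesis using p by blast
  qed
  have uniq: "T1 = T2" if T1B: "T1 \<in> B" and T2B: "T2 \<in> B" for T1 T2
  proof -
    obtain p1 where p1: "T1 = (\<lambda>x. x + p1) ` tangent_cone Q {v}" "p1 \<in> P"
      "\<forall>y\<in>P. y - p1 \<in> tangent_cone Q {v}" using formB[OF T1B] by blast
    obtain p2 where p2: "T2 = (\<lambda>x. x + p2) ` tangent_cone Q {v}" "p2 \<in> P"
      "\<forall>y\<in>P. y - p2 \<in> tangent_cone Q {v}" using formB[OF T2B] by blast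
    have "p2 - p1 \<in> tangent_cone Q {v}" "- (p2 - p1) \<in> tangent_cone Q {v}"
      using p1 p2 by auto
    then have "p2 - p1 = 0" using tc_pointed[OF Q ve] by blast
    then show ?thesis using p1 p2 by simp
  qed
  have zl: "0 \<in> lineal C" if "convex_cone C" for C :: "'a set"
    unfolding lineal_def using convex_cone_contains_0[OF that] by (auto simp: image_iff)
  have iff: "B \<noteq> {} \<longleftrightarrow> tight_translate Q S P"
  proof
    assume "B \<noteq> {}"
    then obtain T where "T \<in> B" by blast
    then obtain p where p: "S = (\<lambda>x. x + p) ` C0" "p \<in> P" "\<forall>y\<in>P. y - p \<in> tangent_cone Q {v}"
      using formB by blast
    have "P \<subseteq> (\<lambda>x. x + p) ` C0"
    proof
      fix y assume "y \<in> P"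
      then have "y - p \<in> C0" using p(3) vsub by blast
      moreover have "y = (y - p) + p" by simp
      ultimately show "y \<in> (\<lambda>x. x + p) ` C0" by blast
    qed
    moreover have "p \<in> (\<lambda>x. x + p) ` lineal C0" using zl[OF cc0] by force
    ultimately have "tightly_contains C0 p P" unfolding tightly_contains_def using p(2) by blast
    then show "tight_translate Q S P" unfolding tight_translate_def using C0(1) p(1) by blast
  next
    assume "tight_translate Q S P"
    then obtain C' w where C': "C' \<in> dual_fan Q" "S = (\<lambda>x. x + w) ` C'" "tightly_contains C' w P"
      unfolding tight_translate_def by blast
    have "(\<lambda>x. x + w) ` C' = (\<lambda>x. x + a) ` C0" using C'(2) C0(2) by simp
    then have "C' = C0" using cone_shift[OF cc_dual[OF C'(1)] cc0] by blast
    then have sub: "P \<subseteq> (\<lambda>x. x + w) ` C0" and ne: "P \<inter> (\<lambda>x. x + w) ` lineal C0 \<noteq> {}"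
      using C'(3) unfolding tightly_contains_def by auto
    then obtain x where x: "x \<in> P" "x \<in> (\<lambda>x. x + w) ` lineal C0" by blast
    then obtain l where l: "l \<in> lineal C0" "x = l + w" by blast
    then obtain c where c: "l \<in> C0" "c \<in> C0" "l = - c" unfolding lineal_def by blast
    obtain p where p: "p \<in> P" "\<forall>y\<in>P. y - p \<in> tangent_cone Q {v}"
      using core[OF Q PD(1) ve] by blast
    have pw: "p - w \<in> C0" using sub p(1) by force
    have xp: "x - p \<in> C0" using p(2) x(1) vsub by blast
    have "(x - p) + c \<in> C0" using convex_cone_add[OF cc0 xp c(2)] .
    moreover have "(x - p) + c = - (p - w)" using l(2) c(3) by (simp add: algebra_simps)
    ultimately have mpw: "- (p - w) \<in> C0" by simp
    have Sp: "S = (\<lambda>x. x + p) ` C0"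
      using shift_lineal[OF cc0 pw mpw, of w] C'(2) \<open>C' = C0\<close> by simp
    define T where "T = (\<lambda>x. x + p) ` tangent_cone Q {v}"
    have pext: "p extreme_point_of P" using apex_extreme[OF Q ve cP p(1) p(2)] .
    then have "p \<in> W" using PD(2) unfolding vertices_def by blast
    then have TX: "T \<in> X_set Q W" unfolding X_set_def min_dual_fan_def T_def using ve by blast
    have TR: "Rel Q T S" unfolding Rel_def T_def v_def using C0(1) Sp by blast
    have Tt: "tight_translate Q T P" unfolding T_def using tight_vertex[OF Q ve] p by blast
    have "T \<in> B" unfolding B_def using TX TR Tt by blast
    then show "B \<noteq> {}" by blast
  qed
  have cardB: "card B = (if tight_translate Q S P then 1 else 0)"
  proof (cases "tight_translate Q S P")
    case True
    then obtain T where T: "T \<in> B" using iff by blast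
    then have "B = {T}" using uniq by blast
    then show ?thesis using True by simp
  next
    case False
    then have "B = {}" using iff by blast
    then show ?thesis using False by simp
  qed
  show ?thesis using sumB cardB True unfolding F_gen_def by simp
qed


theorem proposition2p9:
  fixes Q :: "'a::euclidean_space set" and W :: "'a set"
  assumes "polytope Q" and "Q \<noteq> {}"
    and "\<exists>D \<in> deformations Q. W = vertices D"
  shows "\<exists>E :: ('a set \<Rightarrow> int) \<Rightarrow> ('a set \<Rightarrow> int).
     (\<forall>f \<in> int_funs_on (X_set Q W). E f \<in> int_fin_funs_on (tran_dual_fan Q)) \<and>
     (\<forall>f \<in> int_funs_on (X_set Q W). \<forall>g \<in> int_funs_on (X_set Q W).
        E (\<lambda>S. f S + g S) = (\<lambda>S. E f S + E g S)) \<and>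
     (\<forall>f \<in> int_funs_on (X_set Q W). \<forall>c::int. E (\<lambda>S. c * f S) = (\<lambda>S. c * E f S)) \<and>
     inj_on E (int_funs_on (X_set Q W)) \<and>
     (\<forall>P \<in> deformations_restr Q W. E (FW_gen Q W P) = F_gen Q P)"
proof -
  have Q: "polytope Q" using assms(1) .
  obtain D where D: "D \<in> deformations Q" "W = vertices D" using assms(3) by blast
  have "polyhedron D" using D(1) unfolding deformations_def ext_deformations_def by blast
  then have W: "finite W" using D(2) finite_polyhedron_extreme_points unfolding vertices_def by blast
  have fs: "Emap Q W f \<in> int_fin_funs_on (tran_dual_fan Q)" for f
  proof -
    have "{S. Emap Q W f S \<noteq> 0} \<subseteq> (\<lambda>(C,w). (\<lambda>x. x + w) ` C) ` (dual_fan Q \<times> W)"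
    proof
      fix S assume "S \<in> {S. Emap Q W f S \<noteq> 0}"
      then have "S \<in> tran_dual_fan Q" "(\<Sum>T\<in>{T\<in>X_set Q W. Rel Q T S}. f T) \<noteq> 0"
        unfolding Emap_def by (auto split: if_splits)
      then have "{T\<in>X_set Q W. Rel Q T S} \<noteq> {}" by force
      then obtain T where "T \<in> X_set Q W" "Rel Q T S" by blast
      then obtain C w where "C \<in> dual_fan Q" "w \<in> W" "S = (\<lambda>x. x + w) ` C"
        using Rel_X[OF Q] by blast
      then show "S \<in> (\<lambda>(C,w). (\<lambda>x. x + w) ` C) ` (dual_fan Q \<times> W)" by force
    qed
    then have "finite {S. Emap Q W f S \<noteq> 0}"
      using finite_dual[OF Q] W finite_subset by blast
    moreover have "\<forall>S. S \<notin> tran_dual_fan Q \<longrightarrow> Emap Q W f S = 0" unfolding Emap_def by simp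
    ultimately show ?thesis unfolding int_fin_funs_on_def by blast
  qed
  have add: "Emap Q W (\<lambda>S. f S + g S) = (\<lambda>S. Emap Q W f S + Emap Q W g S)" for f g
    unfolding Emap_def by (auto simp: sum.distrib)
  have mul: "Emap Q W (\<lambda>S. c * f S) = (\<lambda>S. c * Emap Q W f S)" for f and c :: int
    unfolding Emap_def by (auto simp: sum_distrib_left)
  have inj: "inj_on (Emap Q W) (int_funs_on (X_set Q W))"
  proof (rule inj_onI)
    fix f g assume f: "f \<in> int_funs_on (X_set Q W)" and g: "g \<in> int_funs_on (X_set Q W)"
      and eq: "Emap Q W f = Emap Q W g"
    show "f = g"
    proof
      fix S show "f S = g S"
      proof (cases "S \<in> X_set Q W")
        case True
        then show ?thesis using E_diag[OF Q True, of f] E_diag[OF Q True, of g] eq by simp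
      next
        case False
        then show ?thesis using f g unfolding int_funs_on_def by simp
      qed
    qed
  qed
  have main: "\<forall>P \<in> deformations_restr Q W. Emap Q W (FW_gen Q W P) = F_gen Q P"
    using E_main[OF Q W] by blast
  show ?thesis
    by (rule exI[of _ "Emap Q W"]) (use fs add mul inj main in blast)
qed

end
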